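(* The functor $A\mapsto A_{halo}$ induces an equivalence of categories between the category of idempotent semirings whose natural order is total (with semiring morphisms) and the category of tropical halos with multiplicative halo morphisms.
   Context: Semirings are commutative and unital. A halo is a semiring with a partial order compatible with its operations ($x\le z,y\le t\Rightarrow xy\le zt,\ x+y\le z+t$); a halo morphism is an increasing map $f$ with $f(0)=0$, $f(1)=1$, $f(a+b)\le f(a)+f(b)$, $f(ab)\le f(a)f(b)$; it is multiplicative if $f(ab)=f(a)f(b)$. A semiring is idempotent if $a+a=a$ for all $a$; its natural order is $a\le b\iff a+b=b$, and $A_{halo}$ denotes $A$ with this order. A halo is tropical if it is not $\{0\}$, its order is total, and $a+b=\max(a,b)$ for all $a,b$. *)

theory Defs
  imports Main
begin

record 'a semiring_str =
  carrier :: "'a set"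
  sadd :: "'a \<Rightarrow> 'a \<Rightarrow> 'a"
  smul :: "'a \<Rightarrow> 'a \<Rightarrow> 'a"
  szero :: 'a
  sone :: 'a

record 'a halo_str = "'a semiring_str" +
  hle :: "'a \<Rightarrow> 'a \<Rightarrow> bool"

definition is_comm_semiring :: "('a, 'b) semiring_str_scheme \<Rightarrow> bool" where
  "is_comm_semiring R \<longleftrightarrow>
     szero R \<in> carrier R \<and> sone R \<in> carrier R \<and>
     (\<forall>a\<in>carrier R. \<forall>b\<in>carrier R. sadd R a b \<in> carrier R \<and> smul R a b \<in> carrier R) \<and>
     (\<forall>a\<in>carrier R. \<forall>b\<in>carrier R. \<forall>c\<in>carrier R.
        sadd R (sadd R a b) c = sadd R a (sadd R b c) \<and>
        smul R (smul R a b) c = smul R a (smul R b c) \<and>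
        smul R a (sadd R b c) = sadd R (smul R a b) (smul R a c)) \<and>
     (\<forall>a\<in>carrier R. \<forall>b\<in>carrier R. sadd R a b = sadd R b a \<and> smul R a b = smul R b a) \<and>
     (\<forall>a\<in>carrier R. sadd R (szero R) a = a \<and> smul R (sone R) a = a \<and> smul R (szero R) a = szero R)"

definition idempotent_semiring :: "('a, 'b) semiring_str_scheme \<Rightarrow> bool" where
  "idempotent_semiring R \<longleftrightarrow> is_comm_semiring R \<and> (\<forall>a\<in>carrier R. sadd R a a = a)"

definition nat_le :: "('a, 'b) semiring_str_scheme \<Rightarrow> 'a \<Rightarrow> 'a \<Rightarrow> bool" where
  "nat_le R a b \<longleftrightarrow> sadd R a b = b"

definition idem_total_semiring :: "'a semiring_str \<Rightarrow> bool" where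
  "idem_total_semiring R \<longleftrightarrow> idempotent_semiring R \<and> carrier R \<noteq> {szero R} \<and>
     (\<forall>a\<in>carrier R. \<forall>b\<in>carrier R. nat_le R a b \<or> nat_le R b a)"

definition to_halo :: "'a semiring_str \<Rightarrow> 'a halo_str" where
  "to_halo R = \<lparr>carrier = carrier R, sadd = sadd R, smul = smul R, szero = szero R,
                sone = sone R, hle = nat_le R\<rparr>"

definition is_halo :: "'a halo_str \<Rightarrow> bool" where
  "is_halo H \<longleftrightarrow> is_comm_semiring H \<and>
     (\<forall>a\<in>carrier H. hle H a a) \<and>
     (\<forall>a\<in>carrier H. \<forall>b\<in>carrier H. hle H a b \<and> hle H b a \<longrightarrow> a = b) \<and>
     (\<forall>a\<in>carrier H. \<forall>b\<in>carrier H. \<forall>c\<in>carrier H. hle H a b \<and> hle H b c \<longrightarrow> hle H a c) \<and>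
     (\<forall>x\<in>carrier H. \<forall>y\<in>carrier H. \<forall>z\<in>carrier H. \<forall>t\<in>carrier H.
        hle H x z \<and> hle H y t \<longrightarrow> hle H (smul H x y) (smul H z t) \<and> hle H (sadd H x y) (sadd H z t))"

definition tropical_halo :: "'a halo_str \<Rightarrow> bool" where
  "tropical_halo H \<longleftrightarrow> is_halo H \<and> carrier H \<noteq> {szero H} \<and>
     (\<forall>a\<in>carrier H. \<forall>b\<in>carrier H. hle H a b \<or> hle H b a) \<and>
     (\<forall>a\<in>carrier H. \<forall>b\<in>carrier H. sadd H a b = (if hle H a b then b else a))"

definition semiring_hom :: "'a semiring_str \<Rightarrow> 'b semiring_str \<Rightarrow> ('a \<Rightarrow> 'b) \<Rightarrow> bool" where
  "semiring_hom R S f \<longleftrightarrow> (\<forall>a\<in>carrier R. f a \<in> carrier S) \<and>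
     f (szero R) = szero S \<and> f (sone R) = sone S \<and>
     (\<forall>a\<in>carrier R. \<forall>b\<in>carrier R. f (sadd R a b) = sadd S (f a) (f b) \<and>
                                    f (smul R a b) = smul S (f a) (f b))"

definition halo_hom :: "'a halo_str \<Rightarrow> 'b halo_str \<Rightarrow> ('a \<Rightarrow> 'b) \<Rightarrow> bool" where
  "halo_hom H K f \<longleftrightarrow> (\<forall>a\<in>carrier H. f a \<in> carrier K) \<and>
     (\<forall>a\<in>carrier H. \<forall>b\<in>carrier H. hle H a b \<longrightarrow> hle K (f a) (f b)) \<and>
     f (szero H) = szero K \<and> f (sone H) = sone K \<and>
     (\<forall>a\<in>carrier H. \<forall>b\<in>carrier H. hle K (f (sadd H a b)) (sadd K (f a) (f b)) \<and>
                                    hle K (f (smul H a b)) (smul K (f a) (f b)))"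

definition mult_halo_hom :: "'a halo_str \<Rightarrow> 'b halo_str \<Rightarrow> ('a \<Rightarrow> 'b) \<Rightarrow> bool" where
  "mult_halo_hom H K f \<longleftrightarrow> halo_hom H K f \<and>
     (\<forall>a\<in>carrier H. \<forall>b\<in>carrier H. f (smul H a b) = smul K (f a) (f b))"

end

theory Submission
  imports Defs
begin

lemma to_halo_simps[simp]:
  "carrier (to_halo R) = carrier R" "sadd (to_halo R) = sadd R" "smul (to_halo R) = smul R"
  "szero (to_halo R) = szero R" "sone (to_halo R) = sone R" "hle (to_halo R) = nat_le R"
  by (simp_all add: to_halo_def)

lemma csr_to_halo: "is_comm_semiring (to_halo R) = is_comm_semiring R"
  by (simp add: is_comm_semiring_def)

lemma idem_halo:
  assumes I: "idempotent_semiring R"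
  shows "is_halo (to_halo R)"
proof -
  have C: "is_comm_semiring R" and id: "\<forall>a\<in>carrier R. sadd R a a = a"
    using I by (auto simp: idempotent_semiring_def)
  note D = C[unfolded is_comm_semiring_def]
  have cl: "\<And>a b. a \<in> carrier R \<Longrightarrow> b \<in> carrier R \<Longrightarrow> sadd R a b \<in> carrier R \<and> smul R a b \<in> carrier R"
    using D by blast
  have as: "\<And>a b c. a \<in> carrier R \<Longrightarrow> b \<in> carrier R \<Longrightarrow> c \<in> carrier R \<Longrightarrow>
        sadd R (sadd R a b) c = sadd R a (sadd R b c) \<and>
        smul R (smul R a b) c = smul R a (smul R b c) \<and>
        smul R a (sadd R b c) = sadd R (smul R a b) (smul R a c)"
    using D by blast
  have cm: "\<And>a b. a \<in> carrier R \<Longrightarrow> b \<in> carrier R \<Longrightarrow> sadd R a b = sadd R b a \<and> smul R a b = smul R b a"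
    using D by blast
  have mulmono: "smul R x y \<noteq> smul R z t \<longrightarrow> nat_le R (smul R x y) (smul R z t)"
    if h: "x \<in> carrier R" "y \<in> carrier R" "z \<in> carrier R" "t \<in> carrier R" "sadd R x z = z" "sadd R y t = t" for x y z t
  proof -
    have e1: "sadd R (smul R x y) (smul R z y) = smul R z y"
      using as[of y x z] cm[of x y] cm[of z y] cm[of "sadd R x z" y] h cl by metis
    have e2: "sadd R (smul R z y) (smul R z t) = smul R z t"
      using as[of z y t] h by metis
    have "sadd R (smul R x y) (smul R z t) = sadd R (smul R x y) (sadd R (smul R z y) (smul R z t))"
      using e2 by simp
    also have "\<dots> = sadd R (sadd R (smul R x y) (smul R z y)) (smul R z t)"
      using as[of "smul R x y" "smul R z y" "smul R z t"] h cl by metis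
    also have "\<dots> = smul R z t" using e1 e2 by simp
    finally show ?thesis by (simp add: nat_le_def)
  qed
  have addmono: "nat_le R (sadd R x y) (sadd R z t)"
    if h: "x \<in> carrier R" "y \<in> carrier R" "z \<in> carrier R" "t \<in> carrier R" "sadd R x z = z" "sadd R y t = t" for x y z t
  proof -
    have "sadd R (sadd R x y) (sadd R z t) = sadd R x (sadd R y (sadd R z t))"
      using as h cl by metis
    also have "sadd R y (sadd R z t) = sadd R z (sadd R y t)"
      using as[of y z t] as[of z y t] cm[of y z] h by metis
    also have "sadd R x (sadd R z (sadd R y t)) = sadd R (sadd R x z) (sadd R y t)"
      using as h cl by metis
    finally show ?thesis using h by (simp add: nat_le_def)
  qed
  show ?thesis
    unfolding is_halo_def csr_to_halo to_halo_simps
  proof (intro conjI ballI impI)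
    show "is_comm_semiring R" by fact
  next
    fix a assume "a \<in> carrier R" thus "nat_le R a a" using id by (simp add: nat_le_def)
  next
    fix a b assume "a \<in> carrier R" "b \<in> carrier R" "nat_le R a b \<and> nat_le R b a"
    thus "a = b" using cm by (metis nat_le_def)
  next
    fix a b c assume h: "a \<in> carrier R" "b \<in> carrier R" "c \<in> carrier R" "nat_le R a b \<and> nat_le R b c"
    thus "nat_le R a c" using as by (metis nat_le_def)
  next
    fix x y z t assume h: "x \<in> carrier R" "y \<in> carrier R" "z \<in> carrier R" "t \<in> carrier R"
      "nat_le R x z \<and> nat_le R y t"
    show "nat_le R (smul R x y) (smul R z t)"
      using mulmono[OF h(1-4)] h id cl by (metis nat_le_def)
    show "nat_le R (sadd R x y) (sadd R z t)"
      using addmono[OF h(1-4)] h by (simp add: nat_le_def)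
  qed
qed

lemma part1:
  assumes "idem_total_semiring R" shows "tropical_halo (to_halo R)"
proof -
  have I: "idempotent_semiring R" and ne: "carrier R \<noteq> {szero R}"
    and tot: "\<forall>a\<in>carrier R. \<forall>b\<in>carrier R. nat_le R a b \<or> nat_le R b a"
    using assms by (auto simp: idem_total_semiring_def)
  have cm: "\<And>a b. a \<in> carrier R \<Longrightarrow> b \<in> carrier R \<Longrightarrow> sadd R a b = sadd R b a"
    using I by (auto simp: idempotent_semiring_def is_comm_semiring_def)
  show ?thesis unfolding tropical_halo_def to_halo_simps
    using idem_halo[OF I] ne tot cm by (auto simp: nat_le_def)
qed

lemma part2:
  assumes R: "idem_total_semiring R" and S: "idem_total_semiring S"
  shows "semiring_hom R S f \<longleftrightarrow> mult_halo_hom (to_halo R) (to_halo S) f"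
proof -
  have IR: "idempotent_semiring R" and IS: "idempotent_semiring S"
    using R S by (auto simp: idem_total_semiring_def)
  have HS: "is_halo (to_halo S)" by (rule idem_halo[OF IS])
  note HS' = HS[unfolded is_halo_def to_halo_simps]
  have DR: "is_comm_semiring R" and idR: "\<forall>a\<in>carrier R. sadd R a a = a" using IR by (auto simp: idempotent_semiring_def)
  have DS: "is_comm_semiring S" and idS: "\<forall>a\<in>carrier S. sadd S a a = a" using IS by (auto simp: idempotent_semiring_def)
  note DR' = DR[unfolded is_comm_semiring_def] and DS' = DS[unfolded is_comm_semiring_def]
  show ?thesis
  proof
    assume h: "semiring_hom R S f"
    note h' = h[unfolded semiring_hom_def]
    show "mult_halo_hom (to_halo R) (to_halo S) f"
      unfolding mult_halo_hom_def halo_hom_def to_halo_simps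
    proof (intro conjI ballI impI)
      fix a b assume ab: "a \<in> carrier R" "b \<in> carrier R"
      have fc: "f a \<in> carrier S" "f b \<in> carrier S" using h' ab by auto
      have c2: "sadd S (f a) (f b) \<in> carrier S" "smul S (f a) (f b) \<in> carrier S"
        using DS' fc by blast+
      show "nat_le S (f (sadd R a b)) (sadd S (f a) (f b))"
        using h' ab idS c2 by (simp add: nat_le_def)
      show "nat_le S (f (smul R a b)) (smul S (f a) (f b))"
        using h' ab idS c2 by (simp add: nat_le_def)
      show "f (smul R a b) = smul S (f a) (f b)" using h' ab by simp
      assume "nat_le R a b" thus "nat_le S (f a) (f b)" using h' ab by (metis nat_le_def)
    qed (use h' in auto)
  next
    assume h: "mult_halo_hom (to_halo R) (to_halo S) f"
    note h' = h[unfolded mult_halo_hom_def halo_hom_def to_halo_simps]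
    show "semiring_hom R S f" unfolding semiring_hom_def
    proof (intro conjI ballI)
      fix a b assume ab: "a \<in> carrier R" "b \<in> carrier R"
      show "f (smul R a b) = smul S (f a) (f b)" using h' ab by simp
      have abc: "sadd R a b \<in> carrier R" using DR' ab by blast
      have la: "nat_le R a (sadd R a b)" using DR' idR ab unfolding nat_le_def by metis
      have lb: "nat_le R b (sadd R a b)" using DR' idR ab unfolding nat_le_def by metis
      have fa: "nat_le S (f a) (f (sadd R a b))" using h' la ab abc by blast
      have fb: "nat_le S (f b) (f (sadd R a b))" using h' lb ab abc by blast
      have c: "f a \<in> carrier S" "f b \<in> carrier S" "f (sadd R a b) \<in> carrier S" using h' ab abc by auto
      have "nat_le S (sadd S (f a) (f b)) (sadd S (f (sadd R a b)) (f (sadd R a b)))"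
        using HS' fa fb c by blast
      hence l1: "nat_le S (sadd S (f a) (f b)) (f (sadd R a b))" using idS c by simp
      have l2: "nat_le S (f (sadd R a b)) (sadd S (f a) (f b))" using h' ab by blast
      have "sadd S (f a) (f b) \<in> carrier S" using DS' c by blast
      thus "f (sadd R a b) = sadd S (f a) (f b)" using HS' l1 l2 c by blast
    qed (use h' in auto)
  qed
qed

lemma part3:
  fixes H :: "'c halo_str"
  assumes T: "tropical_halo H"
  shows "\<exists>R :: 'c semiring_str. idem_total_semiring R \<and>
             (\<exists>f g. mult_halo_hom (to_halo R) H f \<and> mult_halo_hom H (to_halo R) g \<and>
                    (\<forall>x\<in>carrier R. g (f x) = x) \<and> (\<forall>y\<in>carrier H. f (g y) = y))"
proof -
  define R :: "'c semiring_str" where "R = \<lparr>carrier = carrier H, sadd = sadd H, smul = smul H,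
      szero = szero H, sone = sone H\<rparr>"
  have Rs: "carrier R = carrier H" "sadd R = sadd H" "smul R = smul H" "szero R = szero H" "sone R = sone H"
    by (simp_all add: R_def)
  have Hh: "is_halo H" and ne: "carrier H \<noteq> {szero H}"
    and tot: "\<forall>a\<in>carrier H. \<forall>b\<in>carrier H. hle H a b \<or> hle H b a"
    and mx: "\<forall>a\<in>carrier H. \<forall>b\<in>carrier H. sadd H a b = (if hle H a b then b else a)"
    using T unfolding tropical_halo_def by blast+
  have CH: "is_comm_semiring H" using Hh unfolding is_halo_def by blast
  have refl: "\<And>a. a \<in> carrier H \<Longrightarrow> hle H a a" using Hh unfolding is_halo_def by blast
  have cl: "\<And>a b. a \<in> carrier H \<Longrightarrow> b \<in> carrier H \<Longrightarrow> sadd H a b \<in> carrier H \<and> smul H a b \<in> carrier H"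
    using CH unfolding is_comm_semiring_def by blast
  have CR: "is_comm_semiring R" using CH unfolding is_comm_semiring_def Rs .
  have eq: "nat_le R a b \<longleftrightarrow> hle H a b" if ab: "a \<in> carrier H" "b \<in> carrier H" for a b
  proof
    assume "hle H a b" thus "nat_le R a b" using mx ab by (simp add: nat_le_def Rs)
  next
    assume n: "nat_le R a b"
    show "hle H a b"
    proof (rule ccontr)
      assume "\<not> hle H a b"
      hence "sadd H a b = a" using mx ab by simp
      hence "a = b" using n by (simp add: nat_le_def Rs)
      thus False using refl ab \<open>\<not> hle H a b\<close> by blast
    qed
  qed
  have IR: "idem_total_semiring R"
    unfolding idem_total_semiring_def idempotent_semiring_def
  proof (intro conjI ballI)
    show "is_comm_semiring R" by fact
    show "carrier R \<noteq> {szero R}" using ne by (simp add: Rs)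
  next
    fix a assume "a \<in> carrier R" thus "sadd R a a = a" using mx by (simp add: Rs)
  next
    fix a b assume "a \<in> carrier R" "b \<in> carrier R"
    thus "nat_le R a b \<or> nat_le R b a" using tot eq by (simp add: Rs)
  qed
  have m1: "mult_halo_hom (to_halo R) H id"
    unfolding mult_halo_hom_def halo_hom_def to_halo_simps Rs
    using eq refl cl by simp
  have m2: "mult_halo_hom H (to_halo R) id"
    unfolding mult_halo_hom_def halo_hom_def to_halo_simps Rs
    using eq refl cl by simp
  show ?thesis using IR m1 m2 by (intro exI[of _ R] conjI exI[of _ id]) auto
qed

theorem lemma1p21:
  shows "(\<forall>R :: 'a semiring_str. idem_total_semiring R \<longrightarrow> tropical_halo (to_halo R))
    \<and> (\<forall>(R :: 'a semiring_str) (S :: 'b semiring_str) f.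
          idem_total_semiring R \<longrightarrow> idem_total_semiring S \<longrightarrow>
          (semiring_hom R S f \<longleftrightarrow> mult_halo_hom (to_halo R) (to_halo S) f))
    \<and> (\<forall>H :: 'c halo_str. tropical_halo H \<longrightarrow>
          (\<exists>R :: 'c semiring_str. idem_total_semiring R \<and>
             (\<exists>f g. mult_halo_hom (to_halo R) H f \<and> mult_halo_hom H (to_halo R) g \<and>
                    (\<forall>x\<in>carrier R. g (f x) = x) \<and> (\<forall>y\<in>carrier H. f (g y) = y))))"
  using part1 part2 part3 by blast

end
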